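(* Suppose Assumptions 1, 2 and 3 (stated in the context) hold and $\|\vec L\|_1>0$. Fix an integer $K\ge 1$ and an initial point $x_0\in\mathbb{R}^d$. Run \textsc{signSGD} for $K$ iterations, i.e. for $k=0,\dots,K-1$ set $$x_{k+1}=x_k-\delta_k\,\mathrm{sign}(\tilde g_k),$$ where $\tilde g_k$ is a mini-batch stochastic gradient of size $n_k$ at $x_k$, with $$\delta_k=\frac{1}{\sqrt{\|\vec L\|_1 K}},\qquad n_k=K .$$ Let $N=K^2$ be the total number of stochastic gradient oracle calls. Then $$\left(\mathbb{E}\Big[\frac1K\sum_{k=0}^{K-1}\|g_k\|_1\Big]\right)^2\le \frac{1}{\sqrt N}\left[\sqrt{\|\vec L\|_1}\Big(f_0-f_*+\frac12\Big)+2\|\vec\sigma\|_1\right]^2 ,$$ where $g_k=\nabla f(x_k)$ and $f_0=f(x_0)$.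
   Context: $f:\mathbb{R}^d\to\mathbb{R}$ is differentiable with gradient $g(x)=\nabla f(x)$. Assumption 1: there is a constant $f_*$ with $f(x)\ge f_*$ for all $x$. Assumption 2: there is a vector $\vec L=(L_1,\dots,L_d)$ of non-negative constants such that for all $x,y$, $\big|f(y)-f(x)-g(x)^T(y-x)\big|\le \frac12\sum_{i=1}^d L_i(y_i-x_i)^2$. Assumption 3: upon query $x$, a stochastic gradient oracle returns a random vector $\tilde g(x)$, independent of all other oracle calls, with $\mathbb{E}[\tilde g(x)]=g(x)$ and $\mathbb{E}[(\tilde g(x)_i-g(x)_i)^2]\le\sigma_i^2$ for a vector $\vec\sigma=(\sigma_1,\dots,\sigma_d)$ of non-negative constants. A mini-batch stochastic gradient of size $n$ at $x$ is the average of $n$ independent oracle calls at $x$. $\mathrm{sign}$ acts componentwise, with $\mathrm{sign}(t)=1$ for $t>0$, $-1$ for $t<0$, $0$ for $t=0$. $\|\cdot\|_1$ is the $\ell_1$ norm. *)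

theory Defs
  imports "HOL-Probability.Probability"
begin

definition sign_vec :: "real^'d \<Rightarrow> real^'d" where
  "sign_vec v = (\<chi> i. sgn (v $ i))"

definition norm1 :: "real^'d \<Rightarrow> real" where
  "norm1 v = (\<Sum>i\<in>UNIV. \<bar>v $ i\<bar>)"

text \<open>The stochastic gradient oracle is modelled as
  \<open>G x w\<close> with fresh noise \<open>w\<close>; \<open>\<omega> (k,j)\<close> is the noise of the j-th oracle call
  in iteration k.\<close>
primrec signsgd_iter ::
  "(real^'d \<Rightarrow> 'w \<Rightarrow> real^'d) \<Rightarrow> real \<Rightarrow> nat \<Rightarrow> real^'d \<Rightarrow> (nat \<times> nat \<Rightarrow> 'w) \<Rightarrow> nat \<Rightarrow> real^'d"
where
  "signsgd_iter G \<delta> n x0 \<omega> 0 = x0"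
| "signsgd_iter G \<delta> n x0 \<omega> (Suc k) =
     (let x = signsgd_iter G \<delta> n x0 \<omega> k
      in x - \<delta> *\<^sub>R sign_vec ((1 / real n) *\<^sub>R (\<Sum>j<n. G x (\<omega> (k, j)))))"

end

theory Submission
  imports Defs
begin

lemma sgn_ineq: "- (a::real) * sgn b \<le> - \<bar>a\<bar> + 2 * \<bar>b - a\<bar>"
  by (cases "a > 0"; cases "b > 0"; cases "b = 0"; cases "a = 0") (auto simp: sgn_real_def)

lemma sign_vec_nth[simp]: "sign_vec v $ i = sgn (v $ i)"
  by (simp add: sign_vec_def)

lemma step_ineq:
  fixes f :: "real^'d \<Rightarrow> real" and g :: "real^'d \<Rightarrow> real^'d"
  assumes A2: "\<And>x y. \<bar>f y - f x - g x \<bullet> (y - x)\<bar> \<le> 1/2 * (\<Sum>i\<in>UNIV. L $ i * (y $ i - x $ i)^2)"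
    and Ln: "\<And>i. L $ i \<ge> 0" and d: "\<delta> \<ge> 0"
  shows "\<delta> * norm1 (g x) + f (x - \<delta> *\<^sub>R sign_vec v)
     \<le> f x + \<delta>^2/2 * norm1 L + 2*\<delta>*(\<Sum>i\<in>UNIV. \<bar>v$i - g x $ i\<bar>)"
proof -
  define y where "y = x - \<delta> *\<^sub>R sign_vec v"
  have 1: "f y \<le> f x + g x \<bullet> (y - x) + 1/2 * (\<Sum>i\<in>UNIV. L $ i * (y $ i - x $ i)^2)"
    using A2[of y x] by linarith
  have 2: "g x \<bullet> (y - x) = (\<Sum>i\<in>UNIV. \<delta> * (- (g x $ i) * sgn (v $ i)))"
    by (simp add: y_def inner_vec_def algebra_simps)
  have "... \<le> (\<Sum>i\<in>UNIV. \<delta> * (- \<bar>g x $ i\<bar> + 2 * \<bar>v$i - g x $ i\<bar>))"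
    by (intro sum_mono mult_left_mono sgn_ineq d)
  also have "... = - \<delta> * norm1 (g x) + 2*\<delta>*(\<Sum>i\<in>UNIV. \<bar>v$i - g x $ i\<bar>)"
    by (simp add: norm1_def sum_distrib_left sum.distrib sum_subtractf sum_negf algebra_simps)
  finally have 3: "g x \<bullet> (y - x) \<le> - \<delta> * norm1 (g x) + 2*\<delta>*(\<Sum>i\<in>UNIV. \<bar>v$i - g x $ i\<bar>)"
    using 2 by simp
  have "(\<Sum>i\<in>UNIV. L $ i * (y $ i - x $ i)^2) \<le> (\<Sum>i\<in>UNIV. L $ i * \<delta>^2)"
  proof (intro sum_mono mult_left_mono Ln)
    fix i
    have "(y $ i - x $ i)^2 = \<delta>^2 * (sgn (v$i))^2" by (simp add: y_def power_mult_distrib)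
    also have "... \<le> \<delta>^2 * 1" by (intro mult_left_mono) (auto simp: sgn_real_def)
    finally show "(y $ i - x $ i)^2 \<le> \<delta>^2" by simp
  qed
  also have "... = \<delta>^2 * norm1 L" using Ln by (simp add: norm1_def sum_distrib_right mult.commute)
  finally show ?thesis using 1 3 unfolding y_def[symmetric] by (simp add: field_simps)
qed

lemma prod_two:
  assumes "finite S" "b \<in> S" "c \<in> S" "b \<noteq> c"
  shows "(\<Prod>t\<in>S. (if t = b then u else if t = c then v else 1::real)) = u * v"
proof -
  have "(\<Prod>t\<in>S. (if t = b then u else if t = c then v else 1::real))
     = u * (\<Prod>t\<in>S-{b}. (if t = b then u else if t = c then v else 1::real))"
    using assms by (subst prod.remove[of _ b]) auto
  also have "(\<Prod>t\<in>S-{b}. (if t = b then u else if t = c then v else 1::real))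
     = (\<Prod>t\<in>S-{b}. (if t = c then v else 1::real))"
    by (rule prod.cong) auto
  also have "... = v" using assms by simp
  finally show ?thesis .
qed

context
  fixes P :: "'w measure" and S :: "'i set"
  assumes P: "prob_space P" and S: "finite S"
begin

interpretation PS: product_prob_space "\<lambda>_. P" S
  by (simp add: P prob_space_imp_sigma_finite product_prob_space.intro product_prob_space_axioms.intro product_sigma_finite.intro)

lemma E_single:
  fixes h :: "'w \<Rightarrow> real"
  assumes "b \<in> S" "integrable P h"
  shows "integrable (PiM S (\<lambda>_. P)) (\<lambda>y. h (y b)) \<and> (\<integral>y. h (y b) \<partial>PiM S (\<lambda>_. P)) = (\<integral>w. h w \<partial>P)"
proof -
  let ?F = "\<lambda>t. if t = b then h else (\<lambda>_. 1::real)"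
  have eq: "(\<lambda>y. (\<Prod>t\<in>S. ?F t (y t))) = (\<lambda>y. h (y b))"
  proof
    fix y
    have "(\<Prod>t\<in>S. ?F t (y t)) = (\<Prod>t\<in>S. (if t = b then h (y b) else 1))"
      by (rule prod.cong) auto
    also have "... = h (y b)" using assms S by simp
    finally show "(\<Prod>t\<in>S. ?F t (y t)) = h (y b)" .
  qed
  have int: "\<And>t. t \<in> S \<Longrightarrow> integrable P (?F t)" using assms P
    by (auto intro: finite_measure.integrable_const prob_space.finite_measure)
  have "integrable (PiM S (\<lambda>_. P)) (\<lambda>y. (\<Prod>t\<in>S. ?F t (y t)))"
    by (rule PS.product_integrable_prod[OF S int])
  moreover have "(\<integral>y. (\<Prod>t\<in>S. ?F t (y t)) \<partial>PiM S (\<lambda>_. P)) = (\<Prod>t\<in>S. integral\<^sup>L P (?F t))"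
    by (rule PS.product_integral_prod[OF S int])
  moreover have "(\<Prod>t\<in>S. integral\<^sup>L P (?F t)) = integral\<^sup>L P h"
  proof -
    have "(\<Prod>t\<in>S. integral\<^sup>L P (?F t)) = (\<Prod>t\<in>S. (if t = b then integral\<^sup>L P h else 1))"
      using P by (intro prod.cong) (auto simp: prob_space.prob_space)
    also have "... = integral\<^sup>L P h" using assms S by simp
    finally show ?thesis .
  qed
  ultimately show ?thesis unfolding eq by simp
qed

lemma E_cross:
  fixes h1 h2 :: "'w \<Rightarrow> real"
  assumes "b \<in> S" "c \<in> S" "b \<noteq> c" "integrable P h1" "integrable P h2"
  shows "integrable (PiM S (\<lambda>_. P)) (\<lambda>y. h1 (y b) * h2 (y c)) \<and>
     (\<integral>y. h1 (y b) * h2 (y c) \<partial>PiM S (\<lambda>_. P)) = (\<integral>w. h1 w \<partial>P) * (\<integral>w. h2 w \<partial>P)"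
proof -
  let ?F = "\<lambda>t. if t = b then h1 else if t = c then h2 else (\<lambda>_. 1::real)"
  have eq: "(\<lambda>y. (\<Prod>t\<in>S. ?F t (y t))) = (\<lambda>y. h1 (y b) * h2 (y c))"
  proof
    fix y
    have "(\<Prod>t\<in>S. ?F t (y t)) = (\<Prod>t\<in>S. (if t = b then h1 (y b) else if t = c then h2 (y c) else 1))"
      by (rule prod.cong) auto
    also have "... = h1 (y b) * h2 (y c)" by (rule prod_two[OF S assms(1-3)])
    finally show "(\<Prod>t\<in>S. ?F t (y t)) = h1 (y b) * h2 (y c)" .
  qed
  have int: "\<And>t. t \<in> S \<Longrightarrow> integrable P (?F t)" using assms P
    by (auto intro: finite_measure.integrable_const prob_space.finite_measure)
  have "integrable (PiM S (\<lambda>_. P)) (\<lambda>y. (\<Prod>t\<in>S. ?F t (y t)))"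
    by (rule PS.product_integrable_prod[OF S int])
  moreover have "(\<integral>y. (\<Prod>t\<in>S. ?F t (y t)) \<partial>PiM S (\<lambda>_. P)) = (\<Prod>t\<in>S. integral\<^sup>L P (?F t))"
    by (rule PS.product_integral_prod[OF S int])
  moreover have "(\<Prod>t\<in>S. integral\<^sup>L P (?F t)) = (\<Prod>t\<in>S. (if t = b then integral\<^sup>L P h1 else if t = c then integral\<^sup>L P h2 else 1))"
    using P by (intro prod.cong) (auto simp: prob_space.prob_space)
  moreover have "... = integral\<^sup>L P h1 * integral\<^sup>L P h2" by (rule prod_two[OF S assms(1-3)])
  ultimately show ?thesis unfolding eq by simp
qed

lemma abs_le_quad:
  fixes z t :: real assumes "t > 0"
  shows "\<bar>z\<bar> \<le> (t * z^2 + 1/t) / 2"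
proof -
  have "0 \<le> (t * \<bar>z\<bar> - 1)^2" by simp
  hence "2 * t * \<bar>z\<bar> \<le> t^2 * z^2 + 1" by (simp add: power2_eq_square algebra_simps)
  hence "2 * t * \<bar>z\<bar> / t \<le> (t^2 * z^2 + 1) / t" using assms by (intro divide_right_mono) auto
  thus ?thesis using assms by (simp add: field_simps power2_eq_square)
qed

lemma inner_bound:
  fixes Y :: "'w \<Rightarrow> real" and a :: "nat \<Rightarrow> 'i" and n :: nat
  assumes a: "\<And>j. j < n \<Longrightarrow> a j \<in> S" "inj_on a {..<n}" and n: "n \<ge> 1"
    and Yi: "integrable P Y" and Y0: "integral\<^sup>L P Y = 0"
    and Y2i: "integrable P (\<lambda>w. (Y w)^2)" and Y2: "(\<integral>w. (Y w)^2 \<partial>P) \<le> s^2" and s: "s \<ge> 0"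
  shows "(\<integral>\<^sup>+y. ennreal \<bar>(1 / real n) * (\<Sum>j<n. Y (y (a j)))\<bar> \<partial>PiM S (\<lambda>_. P)) \<le> ennreal (s / sqrt n)"
proof -
  let ?M = "PiM S (\<lambda>_. P)"
  define Z where "Z y = (1 / real n) * (\<Sum>j<n. Y (y (a j)))" for y
  have MP: "prob_space ?M" by (rule prob_space_PiM) (simp add: P)
  have cross: "integrable ?M (\<lambda>y. Y (y (a j)) * Y (y (a l))) \<and>
      (\<integral>y. Y (y (a j)) * Y (y (a l)) \<partial>?M) = (if j = l then (\<integral>w. (Y w)^2 \<partial>P) else 0)"
    if "j < n" "l < n" for j l
  proof (cases "j = l")
    case True
    then show ?thesis using E_single[of "a j" "\<lambda>w. (Y w)^2"] a that Y2i
      by (simp add: power2_eq_square)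
  next
    case False
    hence "a j \<noteq> a l" using a(2) that by (auto dest: inj_onD)
    then show ?thesis using E_cross[of "a j" "a l" Y Y] a that Yi Y0 False by simp
  qed
  have Zsq: "(Z y)^2 = (1 / real n ^ 2) * (\<Sum>j<n. \<Sum>l<n. Y (y (a j)) * Y (y (a l)))" for y
    by (simp add: Z_def power2_eq_square sum_product)
  have Zsq_int: "integrable ?M (\<lambda>y. (Z y)^2)"
  proof -
    have "integrable ?M (\<lambda>y. \<Sum>j<n. \<Sum>l<n. Y (y (a j)) * Y (y (a l)))"
      apply (rule Bochner_Integration.integrable_sum, rule Bochner_Integration.integrable_sum)
      using cross by auto
    thus ?thesis unfolding Zsq by (rule integrable_mult_right)
  qed
  have "(\<integral>y. (Z y)^2 \<partial>?M) = (1 / real n ^ 2) * (\<Sum>j<n. \<Sum>l<n. (\<integral>y. Y (y (a j)) * Y (y (a l)) \<partial>?M))"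
  proof -
    have "(\<integral>y. (\<Sum>j<n. \<Sum>l<n. Y (y (a j)) * Y (y (a l))) \<partial>?M)
       = (\<Sum>j<n. (\<integral>y. (\<Sum>l<n. Y (y (a j)) * Y (y (a l))) \<partial>?M))"
      apply (rule Bochner_Integration.integral_sum)
      apply (rule Bochner_Integration.integrable_sum) using cross by auto
    also have "... = (\<Sum>j<n. \<Sum>l<n. (\<integral>y. Y (y (a j)) * Y (y (a l)) \<partial>?M))"
      apply (rule sum.cong, simp)
      apply (rule Bochner_Integration.integral_sum) using cross by auto
    finally show ?thesis unfolding Zsq by simp
  qed
  also have "... = (1 / real n ^ 2) * (\<Sum>j<n. \<Sum>l<n. (if j = l then (\<integral>w. (Y w)^2 \<partial>P) else 0))"
    using cross by simp
  also have "... = (1 / real n ^ 2) * (real n * (\<integral>w. (Y w)^2 \<partial>P))"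
    by simp
  also have "... = (\<integral>w. (Y w)^2 \<partial>P) / real n" using n by (simp add: power2_eq_square)
  also have "... \<le> s^2 / real n" using Y2 n by (intro divide_right_mono) auto
  finally have EZ2: "(\<integral>y. (Z y)^2 \<partial>?M) \<le> s^2 / real n" .
  have Zint: "integrable ?M Z"
  proof -
    have "integrable ?M (\<lambda>y. \<Sum>j<n. Y (y (a j)))"
      using E_single[OF a(1) Yi] by (intro Bochner_Integration.integrable_sum) auto
    thus ?thesis unfolding Z_def by (rule integrable_mult_right)
  qed
  have Zabs: "integrable ?M (\<lambda>y. \<bar>Z y\<bar>)" using Zint by (rule integrable_abs)
  have key: "(\<integral>y. \<bar>Z y\<bar> \<partial>?M) \<le> (t * (s^2 / real n) + 1/t) / 2" if t: "t > 0" for t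
  proof -
    have "(\<integral>y. \<bar>Z y\<bar> \<partial>?M) \<le> (\<integral>y. (t * (Z y)^2 + 1/t) / 2 \<partial>?M)"
      using Zabs Zsq_int MP abs_le_quad[OF t]
      by (intro integral_mono) (auto intro!: integrable_divide integrable_add integrable_mult_right
           intro: finite_measure.integrable_const prob_space.finite_measure)
    also have "... = (t * (\<integral>y. (Z y)^2 \<partial>?M) + 1/t) / 2"
      using Zsq_int MP by (simp add: prob_space.prob_space)
    also have "... \<le> (t * (s^2 / real n) + 1/t) / 2"
      using EZ2 t by (intro divide_right_mono add_right_mono mult_left_mono) auto
    finally show ?thesis .
  qed
  have bound: "(\<integral>y. \<bar>Z y\<bar> \<partial>?M) \<le> s / sqrt n"
  proof (cases "s > 0")
    case True
    have sn: "sqrt n > 0" using n by simp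
    have nn: "real n = sqrt n * sqrt n" using n by simp
    have "(t * (s^2 / real n) + 1/t) / 2 = s / sqrt n" if "t = sqrt n / s" for t
    proof -
      have "t * (s^2 / real n) = s / sqrt n" unfolding that
        by (subst nn) (use True sn in \<open>simp add: field_simps power2_eq_square\<close>)
      moreover have "1 / t = s / sqrt n" unfolding that by simp
      ultimately show ?thesis by simp
    qed
    then show ?thesis using key[of "sqrt n / s"] True sn by simp
  next
    case False
    hence s0: "s = 0" using s by simp
    show ?thesis
    proof (rule ccontr)
      assume "\<not> ?thesis"
      hence c: "(\<integral>y. \<bar>Z y\<bar> \<partial>?M) > 0" using s0 by simp
      have "(\<integral>y. \<bar>Z y\<bar> \<partial>?M) \<le> (\<integral>y. \<bar>Z y\<bar> \<partial>?M) / 2"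
        using key[of "1 / (\<integral>y. \<bar>Z y\<bar> \<partial>?M)"] c s0 by simp
      thus False using c by simp
    qed
  qed
  have "(\<integral>\<^sup>+y. ennreal \<bar>Z y\<bar> \<partial>?M) = ennreal (\<integral>y. \<bar>Z y\<bar> \<partial>?M)"
    using Zabs by (intro nn_integral_eq_integral) auto
  also have "... \<le> ennreal (s / sqrt n)" using bound by (rule ennreal_leI)
  finally show ?thesis unfolding Z_def .
qed

end

lemma sign_vec_measurable: "sign_vec \<in> borel_measurable (borel :: (real^'d) measure)"
proof (rule borel_measurable_euclidean_space[THEN iffD2], rule ballI)
  fix b :: "real^'d" assume "b \<in> Basis"
  then obtain i u where b: "b = axis i u" unfolding Basis_vec_def by blast
  have "(\<lambda>x::real^'d. sign_vec x \<bullet> b) = (\<lambda>x. sgn (x $ i) * u)"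
    by (simp add: b inner_axis)
  moreover have "(\<lambda>x::real^'d. x $ i) \<in> borel_measurable borel"
    by (intro borel_measurable_continuous_onI linear_continuous_on bounded_linear_vec_nth)
  ultimately show "(\<lambda>x. sign_vec x \<bullet> b) \<in> borel_measurable borel"
    using measurable_comp[OF _ borel_measurable_sgn] by (simp add: comp_def borel_measurable_times)
qed

lemma iter_Suc: "signsgd_iter G \<delta> n x0 \<omega> (Suc k) = signsgd_iter G \<delta> n x0 \<omega> k -
   \<delta> *\<^sub>R sign_vec ((1 / real n) *\<^sub>R (\<Sum>j<n. G (signsgd_iter G \<delta> n x0 \<omega> k) (\<omega> (k, j))))"
  by (simp add: Let_def)

lemma iter_dep:
  assumes "\<And>j l. j < k \<Longrightarrow> l < n \<Longrightarrow> \<omega> (j,l) = \<omega>' (j,l)"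
  shows "signsgd_iter G \<delta> n x0 \<omega> k = signsgd_iter G \<delta> n x0 \<omega>' k"
  using assms
proof (induction k)
  case 0 then show ?case by simp
next
  case (Suc k)
  have e: "signsgd_iter G \<delta> n x0 \<omega> k = signsgd_iter G \<delta> n x0 \<omega>' k" using Suc by auto
  have s: "(\<Sum>j<n. G (signsgd_iter G \<delta> n x0 \<omega>' k) (\<omega> (k, j))) = (\<Sum>j<n. G (signsgd_iter G \<delta> n x0 \<omega>' k) (\<omega>' (k, j)))"
    by (rule sum.cong) (use Suc.prems in \<open>auto\<close>)
  show ?case by (simp only: iter_Suc e s)
qed

lemma iter_meas:
  fixes G :: "real^'d \<Rightarrow> 'w \<Rightarrow> real^'d"
  assumes G: "case_prod G \<in> borel_measurable (borel \<Otimes>\<^sub>M P)" and k: "k \<le> K"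
  shows "(\<lambda>\<omega>. signsgd_iter G \<delta> K x0 \<omega> k) \<in> borel_measurable (PiM ({..<K} \<times> {..<K}) (\<lambda>_. P))"
  using k
proof (induction k)
  case 0 then show ?case by simp
next
  case (Suc k)
  let ?X = "\<lambda>\<omega>. signsgd_iter G \<delta> K x0 \<omega> k"
  have X: "?X \<in> borel_measurable (PiM ({..<K} \<times> {..<K}) (\<lambda>_. P))" using Suc by simp
  have comp: "(\<lambda>\<omega>. G (?X \<omega>) (\<omega> (k, j))) \<in> borel_measurable (PiM ({..<K} \<times> {..<K}) (\<lambda>_. P))"
    if "j < K" for j
  proof -
    have "(\<lambda>\<omega>. (?X \<omega>, \<omega> (k, j))) \<in> measurable (PiM ({..<K} \<times> {..<K}) (\<lambda>_. P)) (borel \<Otimes>\<^sub>M P)"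
      using Suc.prems that by (intro measurable_Pair X measurable_component_singleton) auto
    from measurable_comp[OF this G] show ?thesis by (simp add: comp_def)
  qed
  have "(\<lambda>\<omega>. \<Sum>j<K. G (?X \<omega>) (\<omega> (k, j))) \<in> borel_measurable (PiM ({..<K} \<times> {..<K}) (\<lambda>_. P))"
    using comp by (intro borel_measurable_sum) auto
  note sm = this
  have "(\<lambda>\<omega>. sign_vec ((1 / real K) *\<^sub>R (\<Sum>j<K. G (?X \<omega>) (\<omega> (k, j))))) \<in> borel_measurable (PiM ({..<K} \<times> {..<K}) (\<lambda>_. P))"
    using measurable_comp[OF borel_measurable_scaleR[OF borel_measurable_const sm] sign_vec_measurable]
    by (simp add: comp_def)
  then show ?case unfolding iter_Suc using X by (intro borel_measurable_diff borel_measurable_scaleR) auto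
qed


lemma gh_meas:
  fixes G :: "real^'d \<Rightarrow> 'w \<Rightarrow> real^'d"
  assumes G: "case_prod G \<in> borel_measurable (borel \<Otimes>\<^sub>M P)" and k: "k < K"
  shows "(\<lambda>\<omega>. (\<Sum>j<K. G (signsgd_iter G \<delta> K x0 \<omega> k) (\<omega> (k, j)))) \<in> borel_measurable (PiM ({..<K} \<times> {..<K}) (\<lambda>_. P))"
proof -
  let ?X = "\<lambda>\<omega>. signsgd_iter G \<delta> K x0 \<omega> k"
  have X: "?X \<in> borel_measurable (PiM ({..<K} \<times> {..<K}) (\<lambda>_. P))" using iter_meas[OF G] k by simp
  have comp: "(\<lambda>\<omega>. G (?X \<omega>) (\<omega> (k, j))) \<in> borel_measurable (PiM ({..<K} \<times> {..<K}) (\<lambda>_. P))"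
    if "j < K" for j
  proof -
    have "(\<lambda>\<omega>. (?X \<omega>, \<omega> (k, j))) \<in> measurable (PiM ({..<K} \<times> {..<K}) (\<lambda>_. P)) (borel \<Otimes>\<^sub>M P)"
      using k that by (intro measurable_Pair X measurable_component_singleton) auto
    from measurable_comp[OF this G] show ?thesis by (simp add: comp_def)
  qed
  show ?thesis using comp by (intro borel_measurable_sum) auto
qed

lemma vec_nth_meas[measurable]: "(\<lambda>x::real^'d. x $ i) \<in> borel_measurable borel"
  by (intro borel_measurable_continuous_onI linear_continuous_on bounded_linear_vec_nth)

lemma norm1_meas[measurable]: "(norm1 :: real^'d \<Rightarrow> real) \<in> borel_measurable borel"
  unfolding norm1_def by measurable

lemma norm1_nonneg: "norm1 v \<ge> 0"
  unfolding norm1_def by (simp add: sum_nonneg)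

lemma final_alg:
  fixes Lp K F0 s :: real
  assumes Lp: "Lp > 0" and K: "K > 0"
  shows "(F0 + K * ((1 / sqrt (Lp * K))^2 / 2 * Lp + 2 * (1 / sqrt (Lp * K)) * s / sqrt K)) / (K * (1 / sqrt (Lp * K)))
     = (sqrt Lp * (F0 + 1/2) + 2 * s) / sqrt K"
proof -
  define u where "u = sqrt Lp"
  define v where "v = sqrt K"
  have u: "u > 0" "Lp = u^2" using Lp by (auto simp: u_def)
  have v: "v > 0" "K = v^2" using K by (auto simp: v_def)
  have sq: "sqrt (Lp * K) = u * v" by (simp add: u_def v_def real_sqrt_mult)
  show ?thesis unfolding sq unfolding u_def[symmetric] v_def[symmetric] using u v
    by (simp add: field_simps power2_eq_square)
qed

theorem theorem1:
  fixes f :: "real^'d \<Rightarrow> real" and g :: "real^'d \<Rightarrow> real^'d"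
    and f_star :: real and L \<sigma> :: "real^'d"
    and P :: "'w measure" and G :: "real^'d \<Rightarrow> 'w \<Rightarrow> real^'d"
    and K :: nat and x0 :: "real^'d"
  assumes grad: "\<And>x. (f has_derivative (\<lambda>h. g x \<bullet> h)) (at x)"
    and A1: "\<And>x. f x \<ge> f_star"
    and A2_nonneg: "\<And>i. L $ i \<ge> 0"
    and A2: "\<And>x y. \<bar>f y - f x - g x \<bullet> (y - x)\<bar> \<le> 1/2 * (\<Sum>i\<in>UNIV. L $ i * (y $ i - x $ i)^2)"
    and A3_prob: "prob_space P"
    and A3_meas: "case_prod G \<in> borel_measurable (borel \<Otimes>\<^sub>M P)"
    and A3_int: "\<And>x. integrable P (G x)"
    and A3_unbiased: "\<And>x. (\<integral>w. G x w \<partial>P) = g x"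
    and A3_var_int: "\<And>x i. integrable P (\<lambda>w. (G x w $ i - g x $ i)^2)"
    and A3_var: "\<And>x i. (\<integral>w. (G x w $ i - g x $ i)^2 \<partial>P) \<le> (\<sigma> $ i)^2"
    and \<sigma>_nonneg: "\<And>i. \<sigma> $ i \<ge> 0"
    and L_pos: "norm1 L > 0"
    and K_pos: "K \<ge> 1"
  shows "(\<integral>\<omega>. (1 / real K) * (\<Sum>k<K. norm1 (g (signsgd_iter G (1 / sqrt (norm1 L * real K)) K x0 \<omega> k)))
            \<partial>(PiM ({..<K} \<times> {..<K}) (\<lambda>_. P)))^2
         \<le> 1 / sqrt (real (K^2)) * (sqrt (norm1 L) * (f x0 - f_star + 1/2) + 2 * norm1 \<sigma>)^2"
proof -
  interpret P: prob_space P by (rule A3_prob)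
  define I where "I = {..<K} \<times> {..<K}"
  define M where "M = PiM I (\<lambda>_. P)"
  define \<delta> where "\<delta> = 1 / sqrt (norm1 L * real K)"
  define X where "X k \<omega> = signsgd_iter G \<delta> K x0 \<omega> k" for k \<omega>
  define Gh where "Gh k \<omega> = (1 / real K) *\<^sub>R (\<Sum>j<K. G (X k \<omega>) (\<omega> (k, j)))" for k \<omega>
  have MP: "prob_space M" unfolding M_def by (rule prob_space_PiM) (simp add: A3_prob)
  interpret M: prob_space M by (rule MP)
  have Kpos: "real K > 0" using K_pos by simp
  have dpos: "\<delta> > 0" using L_pos Kpos by (simp add: \<delta>_def)
  have XS: "X (Suc k) \<omega> = X k \<omega> - \<delta> *\<^sub>R sign_vec (Gh k \<omega>)" for k \<omega>
    unfolding X_def Gh_def by (rule iter_Suc)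
  have g_eq: "g = (\<lambda>x. \<integral>w. G x w \<partial>P)" using A3_unbiased by auto
  have g_meas[measurable]: "g \<in> borel_measurable borel"
    unfolding g_eq by (rule P.borel_measurable_lebesgue_integral[OF A3_meas])
  have f_meas[measurable]: "f \<in> borel_measurable borel"
    by (rule borel_measurable_continuous_onI)
       (meson grad has_derivative_continuous continuous_at_imp_continuous_on)
  have X_meas: "X k \<in> borel_measurable M" if "k \<le> K" for k
    unfolding X_def[abs_def] M_def I_def using iter_meas[OF A3_meas that] by simp
  have Gh_meas: "Gh k \<in> borel_measurable M" if "k < K" for k
    unfolding Gh_def[abs_def] X_def M_def I_def
    using gh_meas[OF A3_meas that] by (intro borel_measurable_scaleR) auto
  define c where "c = \<delta>^2/2 * norm1 L"
  have c0: "c \<ge> 0" using L_pos by (simp add: c_def)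
  define b where "b k = (\<integral>\<^sup>+\<omega>. ennreal (\<delta> * norm1 (g (X k \<omega>))) \<partial>M)" for k
  define a where "a k = (\<integral>\<^sup>+\<omega>. ennreal (f (X k \<omega>) - f_star) \<partial>M)" for k
  define e where "e k i = (\<integral>\<^sup>+\<omega>. ennreal \<bar>Gh k \<omega> $ i - g (X k \<omega>) $ i\<bar> \<partial>M)" for k i
  have step: "b k + a (Suc k) \<le> a k + ennreal c + ennreal (2*\<delta>) * (\<Sum>i\<in>UNIV. e k i)" if k: "k < K" for k
  proof -
    have [measurable]: "X k \<in> borel_measurable M" "X (Suc k) \<in> borel_measurable M" "Gh k \<in> borel_measurable M"
      using X_meas Gh_meas k by auto
    have pw: "ennreal (\<delta> * norm1 (g (X k \<omega>))) + ennreal (f (X (Suc k) \<omega>) - f_star)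
      \<le> ennreal (f (X k \<omega>) - f_star) + ennreal c + ennreal (2*\<delta>) * (\<Sum>i\<in>UNIV. ennreal \<bar>Gh k \<omega> $ i - g (X k \<omega>) $ i\<bar>)" for \<omega>
    proof -
      have ineq: "\<delta> * norm1 (g (X k \<omega>)) + f (X (Suc k) \<omega>)
         \<le> f (X k \<omega>) + c + 2*\<delta>*(\<Sum>i\<in>UNIV. \<bar>Gh k \<omega> $ i - g (X k \<omega>) $ i\<bar>)"
        unfolding XS c_def using step_ineq[OF A2 A2_nonneg, of \<delta> "X k \<omega>" "Gh k \<omega>"] dpos by simp
      have n1: "\<delta> * norm1 (g (X k \<omega>)) \<ge> 0" by (rule mult_nonneg_nonneg) (use dpos norm1_nonneg in auto)
      have n2: "f (X (Suc k) \<omega>) - f_star \<ge> 0" "f (X k \<omega>) - f_star \<ge> 0" using A1 by auto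
      have n3: "(\<Sum>i\<in>UNIV. \<bar>Gh k \<omega> $ i - g (X k \<omega>) $ i\<bar>) \<ge> 0" by (simp add: sum_nonneg)
      have "ennreal (\<delta> * norm1 (g (X k \<omega>))) + ennreal (f (X (Suc k) \<omega>) - f_star)
          = ennreal (\<delta> * norm1 (g (X k \<omega>)) + (f (X (Suc k) \<omega>) - f_star))"
        using n1 n2 by (simp add: ennreal_plus)
      also have "... \<le> ennreal ((f (X k \<omega>) - f_star) + c + (2*\<delta>) * (\<Sum>i\<in>UNIV. \<bar>Gh k \<omega> $ i - g (X k \<omega>) $ i\<bar>))"
        using ineq by (intro ennreal_leI) simp
      also have "... = ennreal (f (X k \<omega>) - f_star) + ennreal c + ennreal (2*\<delta>) * ennreal (\<Sum>i\<in>UNIV. \<bar>Gh k \<omega> $ i - g (X k \<omega>) $ i\<bar>)"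
        using n2 n3 c0 dpos by (simp add: ennreal_plus ennreal_mult)
      also have "ennreal (\<Sum>i\<in>UNIV. \<bar>Gh k \<omega> $ i - g (X k \<omega>) $ i\<bar>) = (\<Sum>i\<in>UNIV. ennreal \<bar>Gh k \<omega> $ i - g (X k \<omega>) $ i\<bar>)"
        by (simp add: sum_ennreal)
      finally show ?thesis .
    qed
    have "b k + a (Suc k) = (\<integral>\<^sup>+\<omega>. ennreal (\<delta> * norm1 (g (X k \<omega>))) + ennreal (f (X (Suc k) \<omega>) - f_star) \<partial>M)"
      unfolding a_def b_def by (rule nn_integral_add[symmetric]) auto
    also have "... \<le> (\<integral>\<^sup>+\<omega>. ennreal (f (X k \<omega>) - f_star) + ennreal c + ennreal (2*\<delta>) * (\<Sum>i\<in>UNIV. ennreal \<bar>Gh k \<omega> $ i - g (X k \<omega>) $ i\<bar>) \<partial>M)"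
      by (intro nn_integral_mono pw)
    also have "... = (\<integral>\<^sup>+\<omega>. ennreal (f (X k \<omega>) - f_star) + ennreal c \<partial>M) + (\<integral>\<^sup>+\<omega>. ennreal (2*\<delta>) * (\<Sum>i\<in>UNIV. ennreal \<bar>Gh k \<omega> $ i - g (X k \<omega>) $ i\<bar>) \<partial>M)"
      by (rule nn_integral_add) auto
    also have "(\<integral>\<^sup>+\<omega>. ennreal (f (X k \<omega>) - f_star) + ennreal c \<partial>M) = a k + ennreal c"
      unfolding a_def by (subst nn_integral_add) (auto simp: M.emeasure_space_1)
    also have "(\<integral>\<^sup>+\<omega>. ennreal (2*\<delta>) * (\<Sum>i\<in>UNIV. ennreal \<bar>Gh k \<omega> $ i - g (X k \<omega>) $ i\<bar>) \<partial>M)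
       = ennreal (2*\<delta>) * (\<Sum>i\<in>UNIV. e k i)"
    proof -
      have m: "(\<lambda>\<omega>. \<Sum>i\<in>UNIV. ennreal \<bar>Gh k \<omega> $ i - g (X k \<omega>) $ i\<bar>) \<in> borel_measurable M"
        by measurable
      have "(\<integral>\<^sup>+\<omega>. ennreal (2*\<delta>) * (\<Sum>i\<in>UNIV. ennreal \<bar>Gh k \<omega> $ i - g (X k \<omega>) $ i\<bar>) \<partial>M)
         = ennreal (2*\<delta>) * (\<integral>\<^sup>+\<omega>. (\<Sum>i\<in>UNIV. ennreal \<bar>Gh k \<omega> $ i - g (X k \<omega>) $ i\<bar>) \<partial>M)"
        by (rule nn_integral_cmult[OF m])
      also have "(\<integral>\<^sup>+\<omega>. (\<Sum>i\<in>UNIV. ennreal \<bar>Gh k \<omega> $ i - g (X k \<omega>) $ i\<bar>) \<partial>M) = (\<Sum>i\<in>UNIV. e k i)"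
        unfolding e_def by (rule nn_integral_sum) auto
      finally show ?thesis .
    qed
    finally show ?thesis .
  qed
  have ebound: "e k i \<le> ennreal (\<sigma> $ i / sqrt K)" if k: "k < K" for k i
  proof -
    define J where "J = {..<k} \<times> {..<K}"
    define R where "R = I - J"
    have IJ: "I = J \<union> R" "J \<inter> R = {}" "finite J" "finite R"
      using k by (auto simp: I_def J_def R_def)
    interpret PSF: product_sigma_finite "\<lambda>_. P"
      by (simp add: product_sigma_finite_def prob_space_imp_sigma_finite A3_prob)
    define Y where "Y z w = G z w $ i - g z $ i" for z w
    define F where "F \<omega> = ennreal \<bar>Gh k \<omega> $ i - g (X k \<omega>) $ i\<bar>" for \<omega>
    have [measurable]: "X k \<in> borel_measurable M" "Gh k \<in> borel_measurable M"
      using X_meas Gh_meas k by auto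
    have Fm: "F \<in> borel_measurable (PiM (J \<union> R) (\<lambda>_. P))"
      unfolding F_def IJ(1)[symmetric] M_def[symmetric] by measurable
    have mergeF: "F (merge J R (x, y)) = ennreal \<bar>(1 / real K) * (\<Sum>j<K. Y (X k x) (y (k, j)))\<bar>" for x y
    proof -
      have X1: "X k (merge J R (x, y)) = X k x"
        unfolding X_def by (rule iter_dep) (auto simp: J_def merge_def)
      have y1: "merge J R (x, y) (k, j) = y (k, j)" if "j < K" for j
        using that k by (auto simp: J_def R_def I_def merge_def)
      have "Gh k (merge J R (x, y)) $ i - g (X k (merge J R (x, y))) $ i
          = (1 / real K) * (\<Sum>j<K. G (X k x) (y (k, j)) $ i) - g (X k x) $ i"
        unfolding Gh_def X1 using y1 by simp
      also have "... = (1 / real K) * (\<Sum>j<K. Y (X k x) (y (k, j)))"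
        using Kpos by (simp add: Y_def sum_subtractf field_simps)
      finally show ?thesis unfolding F_def by simp
    qed
    have inner: "(\<integral>\<^sup>+y. F (merge J R (x, y)) \<partial>PiM R (\<lambda>_. P)) \<le> ennreal (\<sigma> $ i / sqrt K)" for x
    proof -
      let ?z = "X k x"
      have Yi: "integrable P (Y ?z)" unfolding Y_def
        using integrable_bounded_linear[OF bounded_linear_vec_nth A3_int] by auto
      have Y0: "integral\<^sup>L P (Y ?z) = 0" unfolding Y_def
        using integrable_bounded_linear[OF bounded_linear_vec_nth A3_int]
        by (simp add: integral_bounded_linear[OF bounded_linear_vec_nth A3_int] A3_unbiased P.prob_space)
      show ?thesis unfolding mergeF
        by (rule inner_bound[OF A3_prob IJ(4), of K "\<lambda>j. (k, j)" "Y ?z"])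
           (use k K_pos Yi Y0 A3_var_int A3_var \<sigma>_nonneg in \<open>auto simp: R_def I_def J_def Y_def inj_on_def\<close>)
    qed
    have "e k i = (\<integral>\<^sup>+\<omega>. F \<omega> \<partial>PiM (J \<union> R) (\<lambda>_. P))"
      unfolding e_def F_def M_def IJ(1) ..
    also have "... = (\<integral>\<^sup>+x. (\<integral>\<^sup>+y. F (merge J R (x, y)) \<partial>PiM R (\<lambda>_. P)) \<partial>PiM J (\<lambda>_. P))"
      by (rule PSF.product_nn_integral_fold[OF IJ(2-4) Fm])
    also have "... \<le> (\<integral>\<^sup>+x. ennreal (\<sigma> $ i / sqrt K) \<partial>PiM J (\<lambda>_. P))"
      by (intro nn_integral_mono inner)
    also have "... = ennreal (\<sigma> $ i / sqrt K)"
    proof -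
      interpret PJ: prob_space "PiM J (\<lambda>_. P)" by (rule prob_space_PiM) (simp add: A3_prob)
      show ?thesis by (simp add: PJ.emeasure_space_1)
    qed
    finally show ?thesis .
  qed
  define D where "D = c + 2 * \<delta> * norm1 \<sigma> / sqrt K"
  have sK: "sqrt (real K) > 0" using Kpos by simp
  have sig0: "norm1 \<sigma> \<ge> 0" by (rule norm1_nonneg)
  have D0: "D \<ge> 0" unfolding D_def using c0 dpos sig0 sK by simp
  have step': "b k + a (Suc k) \<le> a k + ennreal D" if k: "k < K" for k
  proof -
    have "ennreal (2*\<delta>) * (\<Sum>i\<in>UNIV. e k i) \<le> ennreal (2*\<delta>) * (\<Sum>i\<in>UNIV. ennreal (\<sigma> $ i / sqrt K))"
      by (intro mult_left_mono sum_mono ebound k) auto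
    also have "(\<Sum>i\<in>UNIV. ennreal (\<sigma> $ i / sqrt K)) = ennreal (\<Sum>i\<in>UNIV. \<sigma> $ i / sqrt K)"
      using \<sigma>_nonneg sK by (intro sum_ennreal) simp
    also have "(\<Sum>i\<in>UNIV. \<sigma> $ i / sqrt K) = norm1 \<sigma> / sqrt K"
      using \<sigma>_nonneg by (simp add: norm1_def sum_divide_distrib)
    also have "ennreal (2*\<delta>) * ennreal (norm1 \<sigma> / sqrt K) = ennreal (2 * \<delta> * norm1 \<sigma> / sqrt K)"
      using dpos sig0 sK by (subst ennreal_mult[symmetric]) auto
    finally have 1: "ennreal (2*\<delta>) * (\<Sum>i\<in>UNIV. e k i) \<le> ennreal (2 * \<delta> * norm1 \<sigma> / sqrt K)" .
    have "b k + a (Suc k) \<le> a k + ennreal c + ennreal (2*\<delta>) * (\<Sum>i\<in>UNIV. e k i)" by (rule step[OF k])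
    also have "... \<le> a k + ennreal c + ennreal (2 * \<delta> * norm1 \<sigma> / sqrt K)" using 1 by (rule add_left_mono)
    also have "... = a k + ennreal D"
      unfolding D_def using c0 dpos sig0 sK by (simp add: ennreal_plus add.assoc)
    finally show ?thesis .
  qed
  have a0: "a 0 = ennreal (f x0 - f_star)" by (simp add: a_def X_def M.emeasure_space_1)
  have ind: "(\<Sum>k<m. b k) + a m \<le> a 0 + of_nat m * ennreal D" if "m \<le> K" for m
    using that
  proof (induction m)
    case 0 then show ?case by simp
  next
    case (Suc m)
    have "(\<Sum>k<Suc m. b k) + a (Suc m) = (\<Sum>k<m. b k) + (b m + a (Suc m))" by (simp add: add.assoc)
    also have "... \<le> (\<Sum>k<m. b k) + (a m + ennreal D)" using Suc.prems by (intro add_left_mono step') auto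
    also have "... = ((\<Sum>k<m. b k) + a m) + ennreal D" by (simp add: add.assoc)
    also have "... \<le> (a 0 + of_nat m * ennreal D) + ennreal D" using Suc by (intro add_right_mono) auto
    also have "... = a 0 + of_nat (Suc m) * ennreal D" by (simp add: algebra_simps)
    finally show ?case .
  qed
  have sumb: "(\<Sum>k<K. b k) \<le> ennreal (f x0 - f_star) + of_nat K * ennreal D"
  proof -
    have "(\<Sum>k<K. b k) \<le> (\<Sum>k<K. b k) + a K" by (rule add_increasing2) auto
    also have "... \<le> ennreal (f x0 - f_star) + of_nat K * ennreal D" using ind[of K] a0 by simp
    finally show ?thesis .
  qed
  define B where "B = (f x0 - f_star + real K * D) / (real K * \<delta>)"
  have F0: "f x0 - f_star \<ge> 0" using A1 by simp
  have B0: "B \<ge> 0" unfolding B_def using F0 D0 Kpos dpos by simp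
  define h where "h \<omega> = (1 / real K) * (\<Sum>k<K. norm1 (g (X k \<omega>)))" for \<omega>
  have hnn: "(\<integral>\<^sup>+\<omega>. ennreal (h \<omega>) \<partial>M) \<le> ennreal B"
  proof -
    have pw: "ennreal (h \<omega>) = ennreal (1 / (real K * \<delta>)) * (\<Sum>k<K. ennreal (\<delta> * norm1 (g (X k \<omega>))))" for \<omega>
    proof -
      have hq: "h \<omega> = (1 / (real K * \<delta>)) * (\<Sum>k<K. \<delta> * norm1 (g (X k \<omega>)))"
        using dpos by (simp add: h_def sum_distrib_left[symmetric])
      have se: "(\<Sum>k<K. ennreal (\<delta> * norm1 (g (X k \<omega>)))) = ennreal (\<Sum>k<K. \<delta> * norm1 (g (X k \<omega>)))"
        using dpos by (intro sum_ennreal mult_nonneg_nonneg norm1_nonneg) auto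
      have nn: "0 \<le> (\<Sum>k<K. \<delta> * norm1 (g (X k \<omega>)))"
        using dpos by (intro sum_nonneg mult_nonneg_nonneg norm1_nonneg) auto
      show ?thesis unfolding hq se
        by (subst ennreal_mult[symmetric]) (use nn dpos Kpos in auto)
    qed
    have m: "(\<lambda>\<omega>. \<Sum>k<K. ennreal (\<delta> * norm1 (g (X k \<omega>)))) \<in> borel_measurable M"
    proof (intro borel_measurable_sum)
      fix k assume "k \<in> {..<K}"
      hence [measurable]: "X k \<in> borel_measurable M" using X_meas by auto
      show "(\<lambda>\<omega>. ennreal (\<delta> * norm1 (g (X k \<omega>)))) \<in> borel_measurable M" by measurable
    qed
    have "(\<integral>\<^sup>+\<omega>. ennreal (h \<omega>) \<partial>M) = ennreal (1 / (real K * \<delta>)) * (\<integral>\<^sup>+\<omega>. (\<Sum>k<K. ennreal (\<delta> * norm1 (g (X k \<omega>)))) \<partial>M)"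
      unfolding pw by (rule nn_integral_cmult[OF m])
    also have "(\<integral>\<^sup>+\<omega>. (\<Sum>k<K. ennreal (\<delta> * norm1 (g (X k \<omega>)))) \<partial>M) = (\<Sum>k<K. b k)"
      unfolding b_def
    proof (intro nn_integral_sum)
      fix k assume "k \<in> {..<K}"
      hence [measurable]: "X k \<in> borel_measurable M" using X_meas by auto
      show "(\<lambda>\<omega>. ennreal (\<delta> * norm1 (g (X k \<omega>)))) \<in> borel_measurable M" by measurable
    qed
    also have "ennreal (1 / (real K * \<delta>)) * (\<Sum>k<K. b k) \<le> ennreal (1 / (real K * \<delta>)) * (ennreal (f x0 - f_star) + of_nat K * ennreal D)"
      by (intro mult_left_mono sumb) auto
    also have "ennreal (f x0 - f_star) + of_nat K * ennreal D = ennreal (f x0 - f_star + real K * D)"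
      using F0 D0 by (simp add: ennreal_plus ennreal_mult ennreal_of_nat_eq_real_of_nat)
    also have "ennreal (1 / (real K * \<delta>)) * ennreal (f x0 - f_star + real K * D) = ennreal B"
    proof -
      have eq: "B = 1 / (real K * \<delta>) * (f x0 - f_star + real K * D)" unfolding B_def by simp
      show ?thesis unfolding eq
        by (rule ennreal_mult[symmetric]) (use F0 D0 Kpos dpos in auto)
    qed
    finally show ?thesis .
  qed
  have hint: "integral\<^sup>L M h \<le> B" by (rule integral_real_bounded[OF B0 hnn])
  have hge: "integral\<^sup>L M h \<ge> 0"
    by (rule Bochner_Integration.integral_nonneg, unfold h_def) (intro mult_nonneg_nonneg sum_nonneg norm1_nonneg, use Kpos in auto)
  have sq: "(integral\<^sup>L M h)^2 \<le> B^2" using hint hge by (rule power_mono)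
  have Beq: "B = (sqrt (norm1 L) * (f x0 - f_star + 1/2) + 2 * norm1 \<sigma>) / sqrt K"
    using final_alg[OF L_pos Kpos, of "f x0 - f_star" "norm1 \<sigma>"] by (simp add: B_def D_def c_def \<delta>_def)
  have B2: "B^2 = 1 / sqrt (real (K^2)) * (sqrt (norm1 L) * (f x0 - f_star + 1/2) + 2 * norm1 \<sigma>)^2"
    unfolding Beq using Kpos by (simp add: power_divide)
  have hh: "(\<lambda>\<omega>. (1 / real K) * (\<Sum>k<K. norm1 (g (signsgd_iter G (1 / sqrt (norm1 L * real K)) K x0 \<omega> k)))) = h"
    unfolding h_def[abs_def] X_def \<delta>_def ..
  have MM: "PiM ({..<K} \<times> {..<K}) (\<lambda>_. P) = M" unfolding M_def I_def ..
  show ?thesis unfolding hh MM using sq B2 by simp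
qed

end
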